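(* For any positive integer $r$ the group $H^1(\mathrm{SL}_2^+(\mathbb{Z}/2^r),(\mathbb{Z}/2^r)^2)$ (with tautological action) is annihilated by $2^{r-1}$.
   Context: For $n$ even, $\mathrm{SL}_2^+(\mathbb{Z}/n)$ is the kernel of the composite $\mathrm{SL}_2(\mathbb{Z}/n)\to\mathrm{SL}_2(\mathbb{Z}/2)\cong S_3\to\{\pm1\}$ of reduction modulo $2$ and the signature. *)

theory Defs
  imports "HOL-Combinatorics.Permutations"
begin

text \<open>2x2 matrices over Z/n are represented by quadruples (a,b,c,d) of integers
  in {0..<n}, standing for the matrix with rows (a,b) and (c,d).
  Vectors of (Z/n)^2 are pairs of integers in {0..<n}.\<close>

type_synonym mat2 = "int \<times> int \<times> int \<times> int"
type_synonym vec2 = "int \<times> int"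

definition mat_mult :: "int \<Rightarrow> mat2 \<Rightarrow> mat2 \<Rightarrow> mat2" where
  "mat_mult n A B = (case A of (a,b,c,d) \<Rightarrow> case B of (e,f,g,h) \<Rightarrow>
     ((a*e+b*g) mod n, (a*f+b*h) mod n, (c*e+d*g) mod n, (c*f+d*h) mod n))"

definition SL2 :: "int \<Rightarrow> mat2 set" where
  "SL2 n = {(a,b,c,d). a \<in> {0..<n} \<and> b \<in> {0..<n} \<and> c \<in> {0..<n} \<and> d \<in> {0..<n}
                      \<and> (a*d - b*c) mod n = 1 mod n}"

definition Vec :: "int \<Rightarrow> vec2 set" where
  "Vec n = {0..<n} \<times> {0..<n}"

definition act :: "int \<Rightarrow> mat2 \<Rightarrow> vec2 \<Rightarrow> vec2" where
  "act n A v = (case A of (a,b,c,d) \<Rightarrow> case v of (x,y) \<Rightarrow>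
     ((a*x+b*y) mod n, (c*x+d*y) mod n))"

definition vadd :: "int \<Rightarrow> vec2 \<Rightarrow> vec2 \<Rightarrow> vec2" where
  "vadd n v w = ((fst v + fst w) mod n, (snd v + snd w) mod n)"

definition vsub :: "int \<Rightarrow> vec2 \<Rightarrow> vec2 \<Rightarrow> vec2" where
  "vsub n v w = ((fst v - fst w) mod n, (snd v - snd w) mod n)"

definition vscale :: "int \<Rightarrow> int \<Rightarrow> vec2 \<Rightarrow> vec2" where
  "vscale n k v = ((k * fst v) mod n, (k * snd v) mod n)"

text \<open>Signature of the image of a matrix in SL_2(Z/2) = S_3, where S_3 is the
  symmetric group of the three nonzero vectors of (Z/2)^2. The nonzero vector
  (x,y) is encoded by the natural number x + 2y in {1,2,3}.\<close>

definition decode2 :: "nat \<Rightarrow> vec2" where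
  "decode2 i = (int (i mod 2), int (i div 2))"

definition encode2 :: "vec2 \<Rightarrow> nat" where
  "encode2 v = nat (fst v) + 2 * nat (snd v)"

definition perm_mod2 :: "mat2 \<Rightarrow> nat \<Rightarrow> nat" where
  "perm_mod2 A i = (if i \<in> {1,2,3} then encode2 (act 2 A (decode2 i)) else i)"

definition SL2_plus :: "int \<Rightarrow> mat2 set" where
  "SL2_plus n = {A \<in> SL2 n. sign (perm_mod2 A) = 1}"

definition crossed_hom :: "int \<Rightarrow> mat2 set \<Rightarrow> (mat2 \<Rightarrow> vec2) \<Rightarrow> bool" where
  "crossed_hom n G f \<longleftrightarrow> (\<forall>g\<in>G. f g \<in> Vec n) \<and>
     (\<forall>g\<in>G. \<forall>h\<in>G. f (mat_mult n g h) = vadd n (f g) (act n g (f h)))"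

definition principal_crossed_hom :: "int \<Rightarrow> mat2 set \<Rightarrow> (mat2 \<Rightarrow> vec2) \<Rightarrow> bool" where
  "principal_crossed_hom n G f \<longleftrightarrow> (\<exists>m\<in>Vec n. \<forall>g\<in>G. f g = vsub n (act n g m) m)"

definition H1_annihilated_by :: "int \<Rightarrow> mat2 set \<Rightarrow> int \<Rightarrow> bool" where
  "H1_annihilated_by n G k \<longleftrightarrow>
     (\<forall>f. crossed_hom n G f \<longrightarrow> principal_crossed_hom n G (\<lambda>g. vscale n k (f g)))"

end

theory Submission
  imports Defs
begin

lemma SL2_2: "SL2 2 = {(1,0,0,1),(0,1,1,0),(1,1,0,1),(1,0,1,1),(0,1,1,1),(1,1,1,0)}"
proof -
  have r: "\<And>x::int. x \<in> {0..<2} \<longleftrightarrow> x = 0 \<or> x = 1" by auto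
  show ?thesis
  proof (rule set_eqI, rule iffI)
    fix A assume "A \<in> SL2 2"
    then obtain a b c d where A: "A = (a,b,c,d)" and ab: "a = 0 \<or> a = 1" "b = 0 \<or> b = 1" "c = 0 \<or> c = 1" "d = 0 \<or> d = 1"
      and det: "(a*d - b*c) mod 2 = 1 mod 2" unfolding SL2_def r by auto
    show "A \<in> {(1,0,0,1),(0,1,1,0),(1,1,0,1),(1,0,1,1),(0,1,1,1),(1,1,1,0)}"
      using ab det unfolding A by (elim disjE) simp_all
  qed (auto simp: SL2_def)
qed

lemma perm_I: "perm_mod2 (1,0,0,1) = id"
  by (rule ext) (auto simp: perm_mod2_def encode2_def act_def decode2_def)
lemma perm_s: "perm_mod2 (0,1,1,0) = Transposition.transpose 1 2"
  by (rule ext) (auto simp: perm_mod2_def encode2_def act_def decode2_def Transposition.transpose_def)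
lemma perm_u: "perm_mod2 (1,1,0,1) = Transposition.transpose 2 3"
  by (rule ext) (auto simp: perm_mod2_def encode2_def act_def decode2_def Transposition.transpose_def)
lemma perm_l: "perm_mod2 (1,0,1,1) = Transposition.transpose 1 3"
  by (rule ext) (auto simp: perm_mod2_def encode2_def act_def decode2_def Transposition.transpose_def)
lemma perm_c: "perm_mod2 (0,1,1,1) = Transposition.transpose 1 2 \<circ> Transposition.transpose 2 3"
  by (rule ext) (auto simp: perm_mod2_def encode2_def act_def decode2_def Transposition.transpose_def)
lemma perm_c2: "perm_mod2 (1,1,1,0) = Transposition.transpose 2 3 \<circ> Transposition.transpose 1 2"
  by (rule ext) (auto simp: perm_mod2_def encode2_def act_def decode2_def Transposition.transpose_def)

lemma SL2p_2: "SL2_plus 2 = {(1,0,0,1),(0,1,1,1),(1,1,1,0)}"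
  unfolding SL2_plus_def SL2_2
  by (auto simp: perm_I perm_s perm_u perm_l perm_c perm_c2 sign_compose permutation_swap_id sign_swap_id)

lemma bit01: "v \<in> Vec 2 \<Longrightarrow> (\<exists>x y. v = (x,y) \<and> (x = 0 \<or> x = 1) \<and> (y = 0 \<or> y = 1))"
  unfolding Vec_def by auto

lemma case_r1:
  assumes f: "crossed_hom 2 (SL2_plus 2) f"
  shows "principal_crossed_hom 2 (SL2_plus 2) (\<lambda>g. vscale 2 1 (f g))"
proof -
  define I :: mat2 where "I = (1,0,0,1)"
  define c :: mat2 where "c = (0,1,1,1)"
  define c2 :: mat2 where "c2 = (1,1,1,0)"
  have G: "SL2_plus 2 = {I, c, c2}" unfolding SL2p_2 I_def c_def c2_def by simp
  have m2: "mat_mult 2 c c = c2" "mat_mult 2 c c2 = I" "mat_mult 2 I I = I"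
    unfolding mat_mult_def c_def c2_def I_def by simp_all
  have e1: "f I = vadd 2 (f I) (act 2 I (f I))"
    using f m2(3) unfolding crossed_hom_def G by (metis insertI1)
  have e2: "f c2 = vadd 2 (f c) (act 2 c (f c))"
    using f m2 unfolding crossed_hom_def G by (metis insertI1 insertI2)
  have e3: "f I = vadd 2 (f c) (act 2 c (f c2))"
    using f m2 unfolding crossed_hom_def G by (metis insertI1 insertI2)
  have V: "f I \<in> Vec 2" "f c \<in> Vec 2" "f c2 \<in> Vec 2" using f unfolding crossed_hom_def G by auto
  obtain x1 y1 where 1: "f I = (x1,y1)" "x1 = 0 \<or> x1 = 1" "y1 = 0 \<or> y1 = 1" using bit01[OF V(1)] by blast
  obtain x2 y2 where 2: "f c = (x2,y2)" "x2 = 0 \<or> x2 = 1" "y2 = 0 \<or> y2 = 1" using bit01[OF V(2)] by blast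
  obtain x3 y3 where 3: "f c2 = (x3,y3)" "x3 = 0 \<or> x3 = 1" "y3 = 0 \<or> y3 = 1" using bit01[OF V(3)] by blast
  define m where "m = vadd 2 (f c) (f c2)"
  have mV: "m \<in> Vec 2" unfolding m_def vadd_def Vec_def by simp
  have E1: "(x1,y1) = vadd 2 (x1,y1) (act 2 I (x1,y1))" using e1 unfolding 1(1) .
  have E2: "(x3,y3) = vadd 2 (x2,y2) (act 2 c (x2,y2))" using e2 unfolding 2(1) 3(1) .
  have E3: "(x1,y1) = vadd 2 (x2,y2) (act 2 c (x3,y3))" using e3 unfolding 1(1) 2(1) 3(1) .
  note H = E1 E2 E3 1(2,3) 2(2,3) 3(2,3)
  have q1: "vscale 2 1 (f I) = vsub 2 (act 2 I m) m"
    unfolding m_def 1(1) 2(1) 3(1) using H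
    by (elim disjE) (simp_all add: I_def c_def c2_def vadd_def vsub_def vscale_def act_def)
  have q2: "vscale 2 1 (f c) = vsub 2 (act 2 c m) m"
    unfolding m_def 1(1) 2(1) 3(1) using H
    by (elim disjE) (simp_all add: I_def c_def c2_def vadd_def vsub_def vscale_def act_def)
  have q3: "vscale 2 1 (f c2) = vsub 2 (act 2 c2 m) m"
    unfolding m_def 1(1) 2(1) 3(1) using H
    by (elim disjE) (simp_all add: I_def c_def c2_def vadd_def vsub_def vscale_def act_def)
  have eqs: "vscale 2 1 (f g) = vsub 2 (act 2 g m) m" if "g \<in> {I,c,c2}" for g
    using that q1 q2 q3 by blast
  show ?thesis unfolding principal_crossed_hom_def G using mV eqs by blast
qed

lemma key0:
  fixes n u v a b :: int
  shows "((a*(u mod n) + b*(v mod n)) mod n - u mod n) mod n = (a*u + b*v - u) mod n"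
proof -
  have "((a*(u mod n) + b*(v mod n)) mod n - u mod n) mod n = ((a*(u mod n) + b*(v mod n)) - u) mod n"
    by (simp add: mod_diff_eq)
  also have "\<dots> = (a*u + b*v - u) mod n"
  proof -
    have du: "n dvd (u mod n - u)" "n dvd (v mod n - v)"
      by (simp_all add: mod_eq_dvd_iff[symmetric])
    have "(a*(u mod n) + b*(v mod n) - u) - (a*u + b*v - u) = a*(u mod n - u) + b*(v mod n - v)"
      by (simp add: algebra_simps)
    moreover have "n dvd a*(u mod n - u) + b*(v mod n - v)" using du by simp
    ultimately show ?thesis by (simp add: mod_eq_dvd_iff)
  qed
  finally show ?thesis .
qed

lemma key:
  fixes n N p q x a b :: int
  assumes "n dvd (2*x - p + a*p + b*q)"
  shows "(N*2*x) mod n = ((a*((-(N*p)) mod n) + b*((-(N*q)) mod n)) mod n - (-(N*p)) mod n) mod n"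
proof -
  have "n dvd N*2*x - (a*(-(N*p)) + b*(-(N*q)) - (-(N*p)))"
  proof -
    have "N*2*x - (a*(-(N*p)) + b*(-(N*q)) - (-(N*p))) = N*(2*x - p + a*p + b*q)"
      by (simp add: algebra_simps)
    thus ?thesis using assms by simp
  qed
  thus ?thesis unfolding key0 by (simp add: mod_eq_dvd_iff)
qed

lemma case_r2:
  fixes r :: nat
  assumes r: "r \<ge> 2" and f: "crossed_hom (2^r) (SL2_plus (2^r)) f"
  shows "principal_crossed_hom (2^r) (SL2_plus (2^r)) (\<lambda>g. vscale (2^r) (2^(r-1)) (f g))"
proof -
  define n :: int where "n = 2^r"
  define N :: int where "N = 2^(r-2)"
  have nN: "(2::int)^(r-1) = N*2" unfolding N_def using r
    by (metis Suc_diff_Suc Suc_1 diff_Suc_1 le_simps(3) mult.commute numeral_2_eq_2 power_Suc)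
  have n4: "n \<ge> 4" unfolding n_def using r
    by (metis One_nat_def Suc_1 numeral_Bit0 numeral_One power_increasing power2_eq_square
        nat_1_add_1 mult_2 of_nat_numeral zero_less_numeral one_le_numeral numeral_eq_Suc pred_numeral_simps(2) power_Suc0_right power_one_right)
  have nev: "even n" unfolding n_def using r by simp
  define z :: mat2 where "z = (n-1,0,0,n-1)"
  have zSL: "z \<in> SL2 n"
  proof -
    have "(n-1)*(n-1) - 0*0 = 1 + n*(n-2)" by (simp add: algebra_simps)
    hence "((n-1)*(n-1) - 0*0) mod n = 1 mod n" by simp
    thus ?thesis unfolding SL2_def z_def using n4 by auto
  qed
  have odd: "odd (n-1)" using nev by simp
  have pz: "perm_mod2 z = id"
  proof (rule ext)
    fix i
    have m1: "(n-1) mod 2 = 1" using nev by presburger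
    have "(n-1) * 1 mod 2 = 1" using m1 by simp
    thus "perm_mod2 z i = id i"
      by (auto simp: perm_mod2_def encode2_def act_def decode2_def z_def)
  qed
  have zG: "z \<in> SL2_plus n" unfolding SL2_plus_def using zSL pz by simp
  have GS: "SL2_plus n \<subseteq> SL2 n" unfolding SL2_plus_def by auto
  have fc: "\<forall>g\<in>SL2_plus n. f g \<in> Vec n"
    "\<forall>g\<in>SL2_plus n. \<forall>h\<in>SL2_plus n. f (mat_mult n g h) = vadd n (f g) (act n g (f h))"
    using f unfolding crossed_hom_def n_def by auto
  obtain p q where pq: "f z = (p,q)" by fastforce
  define m where "m = ((-(N*p)) mod n, (-(N*q)) mod n)"
  have mV: "m \<in> Vec n" unfolding m_def Vec_def using n4 by simp
  have main: "vscale n (N*2) (f g) = vsub n (act n g m) m" if gG: "g \<in> SL2_plus n" for g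
  proof -
    obtain a b c d where g: "g = (a,b,c,d)" by (cases g) auto
    obtain x y where xy: "f g = (x,y)" by fastforce
    have comm: "mat_mult n z g = mat_mult n g z"
      unfolding z_def g mat_mult_def by (simp add: algebra_simps)
    have "vadd n (f z) (act n z (f g)) = vadd n (f g) (act n g (f z))"
      using fc(2) zG gG comm by metis
    hence eq: "(p + ((n-1)*x) mod n) mod n = (x + (a*p+b*q) mod n) mod n"
      "(q + ((n-1)*y) mod n) mod n = (y + (c*p+d*q) mod n) mod n"
      unfolding pq xy unfolding vadd_def act_def z_def g by simp_all
    have d1: "n dvd (2*x - p + a*p + b*q)"
    proof -
      have "(p + (n-1)*x) mod n = (x + (a*p+b*q)) mod n" using eq(1) by (simp add: mod_add_eq mod_add_right_eq)
      hence "n dvd (p + (n-1)*x) - (x + (a*p+b*q))" by (simp add: mod_eq_dvd_iff)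
      moreover have "(p + (n-1)*x) - (x + (a*p+b*q)) = n*x - (2*x - p + a*p + b*q)" by (simp add: algebra_simps)
      ultimately have A: "n dvd n*x - (2*x - p + a*p + b*q)" by simp
      have "n dvd n*x - (n*x - (2*x - p + a*p + b*q))" by (rule dvd_diff[OF dvd_triv_left A])
      thus ?thesis by (simp add: algebra_simps)
    qed
    have d2: "n dvd (2*y - q + c*p + d*q)"
    proof -
      have "(q + (n-1)*y) mod n = (y + (c*p+d*q)) mod n" using eq(2) by (simp add: mod_add_eq mod_add_right_eq)
      hence "n dvd (q + (n-1)*y) - (y + (c*p+d*q))" by (simp add: mod_eq_dvd_iff)
      moreover have "(q + (n-1)*y) - (y + (c*p+d*q)) = n*y - (2*y - q + d*q + c*p)" by (simp add: algebra_simps)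
      ultimately have A: "n dvd n*y - (2*y - q + d*q + c*p)" by simp
      have "n dvd n*y - (n*y - (2*y - q + d*q + c*p))" by (rule dvd_diff[OF dvd_triv_left A])
      hence "n dvd (2*y - q + d*q + c*p)" by (simp add: algebra_simps)
      thus ?thesis by (simp add: algebra_simps)
    qed
    have d2': "n dvd (2*y - q + d*q + c*p)" using d2 by (simp add: algebra_simps)
    have k1: "(N*2*x) mod n = ((a*((-(N*p)) mod n) + b*((-(N*q)) mod n)) mod n - (-(N*p)) mod n) mod n"
      by (rule key[OF d1])
    have k2: "(N*2*y) mod n = ((d*((-(N*q)) mod n) + c*((-(N*p)) mod n)) mod n - (-(N*q)) mod n) mod n"
      by (rule key[OF d2'])
    have k2': "(N*2*y) mod n = ((c*((-(N*p)) mod n) + d*((-(N*q)) mod n)) mod n - (-(N*q)) mod n) mod n"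
      using k2 by (simp add: add.commute)
    show ?thesis
      unfolding xy unfolding g m_def vscale_def vsub_def act_def using k1 k2' by simp
  qed
  show ?thesis unfolding principal_crossed_hom_def n_def[symmetric] nN
    using mV main by blast
qed

theorem lemma4p6:
  fixes r :: nat
  assumes "r \<ge> 1"
  shows "H1_annihilated_by (2 ^ r) (SL2_plus (2 ^ r)) (2 ^ (r - 1))"
  unfolding H1_annihilated_by_def
proof (intro allI impI)
  fix f assume f: "crossed_hom (2 ^ r) (SL2_plus (2 ^ r)) f"
  show "principal_crossed_hom (2 ^ r) (SL2_plus (2 ^ r)) (\<lambda>g. vscale (2 ^ r) (2 ^ (r - 1)) (f g))"
  proof (cases "r = 1")
    case True thus ?thesis using case_r1 f by simp
  next
    case False thus ?thesis using case_r2 f assms by simp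
  qed
qed

end
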